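(* Let $\alpha\in\mathbb{C}$ with $|\alpha|<1$ and $\phi(z)=\left(\dfrac{z-\alpha}{1-\overline\alpha z}\right)^2$. Then $$\omega_2(S(\phi))=\frac{1+2|\alpha|-|\alpha|^2}{2}.$$
   Context: $S(\phi)$ is the compression of the unilateral shift $Sf=zf$ on the Hardy space $\mathbb{H}^2$ of the unit disc to the model space $H(\phi)=\mathbb{H}^2\ominus\phi\mathbb{H}^2$: $S(\phi)f=P(zf)$, $P$ the orthogonal projection onto $H(\phi)$. $\omega_2$ is the numerical radius. *)

theory Defs
  imports "HOL-Analysis.Analysis"
begin

definition taylor_coeff :: "(complex \<Rightarrow> complex) \<Rightarrow> nat \<Rightarrow> complex" where
  "taylor_coeff f n = (deriv ^^ n) f 0 / fact n"

definition hardy2 :: "(complex \<Rightarrow> complex) set" where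
  "hardy2 = {f. f holomorphic_on ball 0 1 \<and> (\<forall>z. z \<notin> ball 0 1 \<longrightarrow> f z = 0) \<and>
                summable (\<lambda>n. (cmod (taylor_coeff f n))^2)}"

definition h2_inner :: "(complex \<Rightarrow> complex) \<Rightarrow> (complex \<Rightarrow> complex) \<Rightarrow> complex" where
  "h2_inner f g = (\<Sum>n. taylor_coeff f n * cnj (taylor_coeff g n))"

definition h2_norm :: "(complex \<Rightarrow> complex) \<Rightarrow> real" where
  "h2_norm f = sqrt (\<Sum>n. (cmod (taylor_coeff f n))^2)"

definition model_space :: "(complex \<Rightarrow> complex) \<Rightarrow> (complex \<Rightarrow> complex) set" where
  "model_space \<phi> = {f \<in> hardy2. \<forall>g \<in> hardy2. h2_inner f (\<lambda>z. \<phi> z * g z) = 0}"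

definition h2_proj :: "(complex \<Rightarrow> complex) set \<Rightarrow> (complex \<Rightarrow> complex) \<Rightarrow> (complex \<Rightarrow> complex)" where
  "h2_proj K h = (THE p. p \<in> K \<and> (\<forall>k \<in> K. h2_inner (\<lambda>z. h z - p z) k = 0))"

definition compressed_shift :: "(complex \<Rightarrow> complex) \<Rightarrow> (complex \<Rightarrow> complex) \<Rightarrow> (complex \<Rightarrow> complex)" where
  "compressed_shift \<phi> f = h2_proj (model_space \<phi>) (\<lambda>z. z * f z)"

definition numerical_radius ::
  "(complex \<Rightarrow> complex) set \<Rightarrow> ((complex \<Rightarrow> complex) \<Rightarrow> (complex \<Rightarrow> complex)) \<Rightarrow> real" where
  "numerical_radius K T = Sup {cmod (h2_inner (T f) f) | f. f \<in> K \<and> h2_norm f = 1}"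

end

theory Submission
  imports Defs "HOL-Complex_Analysis.Complex_Analysis"
begin


definition Rf :: "complex \<Rightarrow> complex \<Rightarrow> complex \<Rightarrow> complex \<Rightarrow> complex" where
  "Rf \<alpha> a b z = (a * (1 - cnj \<alpha> * z) + b * z) / (1 - cnj \<alpha> * z)^2"

definition Ff :: "complex \<Rightarrow> complex \<Rightarrow> complex \<Rightarrow> complex \<Rightarrow> complex" where
  "Ff \<alpha> a b = (\<lambda>z. if z \<in> ball 0 1 then Rf \<alpha> a b z else 0)"

definition cf :: "complex \<Rightarrow> complex \<Rightarrow> complex \<Rightarrow> nat \<Rightarrow> complex" where
  "cf \<alpha> a b n = a * cnj \<alpha> ^ n + b * of_nat n * cnj \<alpha> ^ (n - 1)"

lemma cf_rec: "cf \<alpha> a b (Suc (Suc k)) - 2 * cnj \<alpha> * cf \<alpha> a b (Suc k) + cnj \<alpha> ^ 2 * cf \<alpha> a b k = 0"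
proof (cases k)
  case 0 thus ?thesis by (simp add: cf_def power2_eq_square algebra_simps)
next
  case (Suc m)
  thus ?thesis by (simp add: cf_def power2_eq_square algebra_simps)
qed

lemma cf_fps_identity:
  "Abs_fps (cf \<alpha> a b) * (1 - fps_const (cnj \<alpha>) * fps_X)^2
   = fps_const a * (1 - fps_const (cnj \<alpha>) * fps_X) + fps_const b * fps_X"
proof -
  define C where "C = Abs_fps (cf \<alpha> a b)"
  define \<beta> where "\<beta> = cnj \<alpha>"
  have G: "(1 - fps_const \<beta> * fps_X)^2 = 1 - fps_const (2*\<beta>) * fps_X + fps_const (\<beta>^2) * fps_X^2"
  proof -
    have "(1 - fps_const \<beta> * fps_X)^2 = 1 - 2 * fps_const \<beta> * fps_X + (fps_const \<beta>)^2 * fps_X^2"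
      by (simp add: power2_eq_square algebra_simps)
    thus ?thesis by (simp add: fps_numeral_fps_const)
  qed
  have E: "C * (1 - fps_const \<beta> * fps_X)^2 = C - fps_const (2*\<beta>) * (C * fps_X^1) + fps_const (\<beta>^2) * (C * fps_X^2)"
    unfolding G by (simp add: algebra_simps)
  have "(C - fps_const (2*\<beta>) * (C * fps_X^1) + fps_const (\<beta>^2) * (C * fps_X^2)) $ n =
          (fps_const a * (1 - fps_const \<beta> * fps_X) + fps_const b * fps_X) $ n" for n
  proof (cases n)
    case 0 thus ?thesis by (simp add: C_def cf_def fps_X_power_mult_right_nth)
  next
    case (Suc m)
    show ?thesis
    proof (cases m)
      case 0 thus ?thesis using Suc by (simp add: C_def cf_def \<beta>_def fps_X_power_mult_right_nth algebra_simps)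
    next
      case (Suc k)
      have "cf \<alpha> a b (Suc (Suc k)) - 2 * \<beta> * cf \<alpha> a b (Suc k) + \<beta> ^ 2 * cf \<alpha> a b k = 0"
        unfolding \<beta>_def by (rule cf_rec)
      thus ?thesis using Suc \<open>n = Suc m\<close>
        by (simp add: C_def fps_X_power_mult_right_nth)
    qed
  qed
  hence "C * (1 - fps_const \<beta> * fps_X)^2 = fps_const a * (1 - fps_const \<beta> * fps_X) + fps_const b * fps_X"
    unfolding E by (intro fps_ext) 
  thus ?thesis unfolding C_def \<beta>_def .
qed

lemma Rf_fps: "Rf \<alpha> a b has_fps_expansion Abs_fps (cf \<alpha> a b)"
proof -
  define G where "G = (1 - fps_const (cnj \<alpha>) * fps_X)^2"
  define N where "N = fps_const a * (1 - fps_const (cnj \<alpha>) * fps_X) + fps_const b * fps_X"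
  have "(\<lambda>z. a * (1 - cnj \<alpha> * z) + b * z) has_fps_expansion N"
    unfolding N_def by (intro fps_expansion_intros)
  moreover have "(\<lambda>z. (1 - cnj \<alpha> * z)^2) has_fps_expansion G"
    unfolding G_def power2_eq_square by (intro fps_expansion_intros)
  moreover have "G $ 0 \<noteq> 0" by (simp add: G_def power2_eq_square)
  ultimately have "(\<lambda>z. (a * (1 - cnj \<alpha> * z) + b * z) / (1 - cnj \<alpha> * z)^2) has_fps_expansion N / G"
    by (intro has_fps_expansion_divide')
  moreover have "N / G = Abs_fps (cf \<alpha> a b)"
  proof -
    have "N / G = Abs_fps (cf \<alpha> a b) * G * inverse G"
      using \<open>G $ 0 \<noteq> 0\<close> cf_fps_identity[of \<alpha> a b] by (simp add: fps_divide_unit G_def N_def)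
    also have "\<dots> = Abs_fps (cf \<alpha> a b)"
      using inverse_mult_eq_1'[OF \<open>G $ 0 \<noteq> 0\<close>] by (simp add: mult.assoc)
    finally show ?thesis .
  qed
  ultimately show ?thesis unfolding Rf_def[abs_def] by simp
qed

lemma Ff_fps: "Ff \<alpha> a b has_fps_expansion Abs_fps (cf \<alpha> a b)"
proof -
  have ev: "eventually (\<lambda>z. z \<in> ball (0::complex) 1) (nhds 0)"
    by (intro eventually_nhds_in_open) auto
  from Rf_fps[of \<alpha> a b] show ?thesis
    unfolding has_fps_expansion_def
    by (auto elim: eventually_elim2[OF _ ev] simp: Ff_def)
qed

lemma taylor_Ff: "taylor_coeff (Ff \<alpha> a b) n = cf \<alpha> a b n"
  using fps_nth_fps_expansion[OF Ff_fps, of \<alpha> a b n] by (simp add: taylor_coeff_def)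

lemma denom_nz: "cmod \<alpha> < 1 \<Longrightarrow> z \<in> ball 0 1 \<Longrightarrow> 1 - cnj \<alpha> * z \<noteq> 0"
proof
  assume "cmod \<alpha> < 1" "z \<in> ball 0 1" "1 - cnj \<alpha> * z = 0"
  hence "cmod (cnj \<alpha> * z) = 1" by (metis eq_iff_diff_eq_0 norm_one)
  moreover have "cmod (cnj \<alpha> * z) < 1"
    using \<open>cmod \<alpha> < 1\<close> \<open>z \<in> ball 0 1\<close>
  proof -
    have "cmod \<alpha> * cmod z \<le> cmod z" using \<open>cmod \<alpha> < 1\<close> by (simp add: mult_left_le_one_le)
    thus ?thesis using \<open>z \<in> ball 0 1\<close> by (simp add: norm_mult)
  qed
  ultimately show False by simp
qed

lemma Rf_holo: "cmod \<alpha> < 1 \<Longrightarrow> Rf \<alpha> a b holomorphic_on ball 0 1"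
proof -
  assume a: "cmod \<alpha> < 1"
  have nz: "(1 - cnj \<alpha> * z)^2 \<noteq> 0" if "z \<in> ball 0 1" for z
    using denom_nz[OF a that] by simp
  show ?thesis unfolding Rf_def[abs_def]
    apply (rule holomorphic_on_divide)
    apply (intro holomorphic_intros)
    apply (intro holomorphic_intros)
    apply (erule nz)
    done
qed

lemma Ff_holo: "cmod \<alpha> < 1 \<Longrightarrow> Ff \<alpha> a b holomorphic_on ball 0 1"
proof -
  assume a: "cmod \<alpha> < 1"
  have "Ff \<alpha> a b holomorphic_on ball 0 1 \<longleftrightarrow> Rf \<alpha> a b holomorphic_on ball 0 1"
    by (rule holomorphic_cong) (simp_all add: Ff_def)
  thus ?thesis using Rf_holo[OF a] by simp
qed

lemma cf_summable:
  assumes "cmod \<alpha> < 1"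
  shows "summable (\<lambda>n. (cmod (cf \<alpha> a b n))^2)"
proof -
  define r where "r = cmod \<alpha>"
  define \<rho> where "\<rho> = (1 + r) / 2"
  have r0: "0 \<le> r" and r1: "r < 1" using assms by (auto simp: r_def)
  have \<rho>0: "0 < \<rho>" and \<rho>1: "\<rho> < 1" and r\<rho>: "r \<le> \<rho>" using r0 r1 by (auto simp: \<rho>_def)
  have "norm (r / \<rho>) < 1" using r0 r1 \<rho>0 by (auto simp: \<rho>_def field_simps)
  hence "(\<lambda>n. of_nat n * (r/\<rho>) ^ n) \<longlonglongrightarrow> 0" by (rule powser_times_n_limit_0)
  hence "Bseq (\<lambda>n. of_nat n * (r/\<rho>) ^ n)" by (rule convergent_imp_Bseq[OF convergentI])
  then obtain K where K: "\<And>n. norm (of_nat n * (r/\<rho>) ^ n) \<le> K" using BseqE by metis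
  have x1: "r/\<rho> \<le> 1" using r\<rho> \<rho>0 by simp
  have bnd: "of_nat n * r ^ (n - 1) \<le> (K + 1) * \<rho> ^ (n - 1)" for n
  proof (cases n)
    case 0 thus ?thesis using K[of 0] \<rho>0 by simp
  next
    case (Suc m)
    have "of_nat (Suc m) * (r/\<rho>)^m = of_nat m * (r/\<rho>)^m + (r/\<rho>)^m" by (simp add: algebra_simps)
    also have "\<dots> \<le> K + 1" using K[of m] power_le_one[of "r/\<rho>" m] r0 \<rho>0 x1
      by (intro add_mono) auto
    finally have "of_nat (Suc m) * r^m / \<rho>^m \<le> K + 1" by (simp add: power_divide)
    hence "of_nat (Suc m) * r^m \<le> (K+1) * \<rho>^m" using \<rho>0 by (simp add: field_simps)
    thus ?thesis using Suc by simp
  qed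
  define M where "M = cmod a + cmod b * (K + 1) / \<rho>"
  have cb: "cmod (cf \<alpha> a b n) \<le> M * \<rho> ^ n" for n
  proof -
    have "cmod (cf \<alpha> a b n) \<le> cmod a * r ^ n + cmod b * (of_nat n * r ^ (n - 1))"
      unfolding cf_def r_def
      by (rule order.trans[OF norm_triangle_ineq]) (simp add: norm_mult norm_power)
    also have "\<dots> \<le> cmod a * \<rho> ^ n + cmod b * ((K + 1) * \<rho> ^ (n - 1))"
      using bnd[of n] r0 r\<rho> by (intro add_mono mult_left_mono power_mono) auto
    also have "\<rho> ^ (n - 1) \<le> \<rho> ^ n / \<rho>"
      using \<rho>0 \<rho>1 by (cases n) auto
    hence "cmod b * ((K + 1) * \<rho> ^ (n - 1)) \<le> cmod b * ((K+1) * (\<rho>^n / \<rho>))"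
      using K[of 0] by (intro mult_left_mono) auto
    finally show ?thesis by (simp add: M_def field_simps)
  qed
  show ?thesis
  proof (rule summable_comparison_test)
    show "\<exists>N. \<forall>n\<ge>N. norm ((cmod (cf \<alpha> a b n))^2) \<le> M^2 * (\<rho>^2)^n"
    proof (intro exI allI impI)
      fix n
      have "(cmod (cf \<alpha> a b n))^2 \<le> (M * \<rho> ^ n)^2"
        using cb[of n] by (intro power_mono) auto
      moreover have "(M * \<rho> ^ n)^2 = M^2 * (\<rho>^2)^n"
        by (simp add: power_mult_distrib flip: power_mult) (simp add: mult.commute)
      ultimately show "norm ((cmod (cf \<alpha> a b n))^2) \<le> M^2 * (\<rho>^2)^n"
        by simp
    qed
    show "summable (\<lambda>n. M^2 * (\<rho>^2)^n)"
    proof (rule summable_mult, rule summable_geometric)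
      show "norm (\<rho>^2) < 1" using \<rho>0 \<rho>1 by (simp add: power_less_one_iff abs_of_pos)
    qed
  qed
qed

lemma Ff_hardy: "cmod \<alpha> < 1 \<Longrightarrow> Ff \<alpha> a b \<in> hardy2"
proof -
  assume a: "cmod \<alpha> < 1"
  have "\<forall>z. z \<notin> ball 0 1 \<longrightarrow> Ff \<alpha> a b z = 0" by (simp add: Ff_def)
  moreover have "summable (\<lambda>n. (cmod (taylor_coeff (Ff \<alpha> a b) n))^2)"
    unfolding taylor_Ff using cf_summable[OF a] .
  ultimately show ?thesis unfolding hardy2_def using Ff_holo[OF a] by blast
qed



lemma taylor_deriv: "taylor_coeff (deriv H) n = of_nat (Suc n) * taylor_coeff H (Suc n)"
proof -
  have "(deriv ^^ n) (deriv H) = (deriv ^^ Suc n) H" by (simp only: funpow_Suc_right o_def)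
  moreover have "(of_nat (Suc n)::complex) \<noteq> 0" by (simp only: of_nat_eq_0_iff)
  moreover have "(fact n::complex) \<noteq> 0" by simp
  ultimately show ?thesis unfolding taylor_coeff_def fact_Suc of_nat_mult
    by (simp add: field_simps del: of_nat_Suc)
qed

lemma sums_val:
  assumes "H holomorphic_on ball 0 1" "w \<in> ball 0 1"
  shows "(\<lambda>n. taylor_coeff H n * w ^ n) sums H w"
  using holomorphic_power_series[OF assms] by (simp add: taylor_coeff_def)

lemma sums_der:
  assumes "H holomorphic_on ball 0 1" "w \<in> ball 0 1"
  shows "(\<lambda>n. taylor_coeff H n * (of_nat n * w ^ (n - 1))) sums deriv H w"
proof -
  have "deriv H holomorphic_on ball 0 1" using assms(1) by (intro holomorphic_deriv) auto
  from sums_val[OF this assms(2)]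
  have "(\<lambda>n. taylor_coeff H (Suc n) * (of_nat (Suc n) * w ^ (Suc n - 1))) sums deriv H w"
    by (simp add: taylor_deriv mult_ac)
  hence "(\<lambda>n. taylor_coeff H n * (of_nat n * w ^ (n - 1))) sums (deriv H w + 0)"
    by (subst (asm) sums_Suc_iff) simp
  thus ?thesis by simp
qed

lemma inner_Ff_right:
  assumes "cmod \<alpha> < 1" "H holomorphic_on ball 0 1"
  shows "(\<lambda>n. taylor_coeff H n * cnj (taylor_coeff (Ff \<alpha> a b) n)) sums (cnj a * H \<alpha> + cnj b * deriv H \<alpha>)"
proof -
  have w: "\<alpha> \<in> ball 0 1" using assms(1) by simp
  have "(\<lambda>n. cnj a * (taylor_coeff H n * \<alpha> ^ n) + cnj b * (taylor_coeff H n * (of_nat n * \<alpha> ^ (n - 1))))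
        sums (cnj a * H \<alpha> + cnj b * deriv H \<alpha>)"
    by (intro sums_add sums_mult sums_val sums_der assms w)
  moreover have "taylor_coeff H n * cnj (taylor_coeff (Ff \<alpha> a b) n) =
     cnj a * (taylor_coeff H n * \<alpha> ^ n) + cnj b * (taylor_coeff H n * (of_nat n * \<alpha> ^ (n - 1)))" for n
    by (simp add: taylor_Ff cf_def algebra_simps)
  ultimately show ?thesis by simp
qed

lemma h2_inner_Ff_right:
  assumes "cmod \<alpha> < 1" "H holomorphic_on ball 0 1"
  shows "h2_inner H (Ff \<alpha> a b) = cnj a * H \<alpha> + cnj b * deriv H \<alpha>"
  unfolding h2_inner_def using sums_unique[OF inner_Ff_right[OF assms]] by simp

lemma h2_inner_Ff_left:
  assumes "cmod \<alpha> < 1" "H holomorphic_on ball 0 1"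
  shows "h2_inner (Ff \<alpha> a b) H = a * cnj (H \<alpha>) + b * cnj (deriv H \<alpha>)"
proof -
  have "(\<lambda>n. cnj (taylor_coeff H n * cnj (taylor_coeff (Ff \<alpha> a b) n))) sums cnj (cnj a * H \<alpha> + cnj b * deriv H \<alpha>)"
    using inner_Ff_right[OF assms] by (simp only: sums_cnj)
  hence "(\<lambda>n. taylor_coeff (Ff \<alpha> a b) n * cnj (taylor_coeff H n)) sums (a * cnj (H \<alpha>) + b * cnj (deriv H \<alpha>))"
    by (simp add: mult.commute)
  thus ?thesis unfolding h2_inner_def by (simp add: sums_iff)
qed

lemma Rf_deriv:
  assumes "1 - cnj \<alpha> * z \<noteq> 0"
  shows "(Rf \<alpha> a b has_field_derivative
           (a * cnj \<alpha> * (1 - cnj \<alpha> * z) + b * (1 + cnj \<alpha> * z)) / (1 - cnj \<alpha> * z)^3) (at z)"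
proof -
  define u where "u = 1 - cnj \<alpha> * z"
  have u0: "u \<noteq> 0" using assms by (simp add: u_def)
  have d1: "((\<lambda>z. a * (1 - cnj \<alpha> * z) + b * z) has_field_derivative (b - a * cnj \<alpha>)) (at z)"
    by (auto intro!: derivative_eq_intros simp: algebra_simps)
  have d2: "((\<lambda>z. (1 - cnj \<alpha> * z)^2) has_field_derivative (- 2 * cnj \<alpha> * u)) (at z)"
    unfolding power2_eq_square by (auto intro!: derivative_eq_intros simp: algebra_simps u_def)
  have "(Rf \<alpha> a b has_field_derivative
          ((b - a * cnj \<alpha>) * u^2 - (a * u + b * z) * (- 2 * cnj \<alpha> * u)) / (u^2 * u^2)) (at z)"
    unfolding Rf_def[abs_def] using DERIV_divide[OF d1 d2] u0 by (simp add: u_def)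
  moreover have "(b - a * cnj \<alpha>) * u^2 - (a * u + b * z) * (- 2 * cnj \<alpha> * u)
                 = u * (a * cnj \<alpha> * u + b * (1 + cnj \<alpha> * z))"
    by (simp add: u_def algebra_simps power2_eq_square)
  moreover have "u * (a * cnj \<alpha> * u + b * (1 + cnj \<alpha> * z)) / (u^2 * u^2) =
                 (a * cnj \<alpha> * u + b * (1 + cnj \<alpha> * z)) / u^3"
    using u0 by (simp add: field_simps power2_eq_square power3_eq_cube)
  ultimately show ?thesis by (simp add: u_def)
qed

lemma deriv_Ff:
  assumes "cmod \<alpha> < 1" "z \<in> ball 0 1"
  shows "deriv (Ff \<alpha> a b) z = (a * cnj \<alpha> * (1 - cnj \<alpha> * z) + b * (1 + cnj \<alpha> * z)) / (1 - cnj \<alpha> * z)^3"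
proof -
  have ev: "eventually (\<lambda>w. Ff \<alpha> a b w = Rf \<alpha> a b w) (nhds z)"
    using eventually_nhds_in_open[of "ball 0 1" z] assms(2)
    by (auto elim!: eventually_mono simp: Ff_def)
  have "deriv (Ff \<alpha> a b) z = deriv (Rf \<alpha> a b) z"
    by (rule deriv_cong_ev[OF ev refl])
  also have "deriv (Rf \<alpha> a b) z = (a * cnj \<alpha> * (1 - cnj \<alpha> * z) + b * (1 + cnj \<alpha> * z)) / (1 - cnj \<alpha> * z)^3"
    by (rule DERIV_imp_deriv[OF Rf_deriv[OF denom_nz[OF assms]]])
  finally show ?thesis .
qed



abbreviation phi :: "complex \<Rightarrow> complex \<Rightarrow> complex" where
  "phi \<alpha> \<equiv> (\<lambda>z. ((z - \<alpha>) / (1 - cnj \<alpha> * z))^2)"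

lemma phi_holo: "cmod \<alpha> < 1 \<Longrightarrow> phi \<alpha> holomorphic_on ball 0 1"
proof -
  assume a: "cmod \<alpha> < 1"
  have nz: "1 - cnj \<alpha> * z \<noteq> 0" if "z \<in> ball 0 1" for z
    using denom_nz[OF a that] by simp
  show ?thesis
    apply (intro holomorphic_on_power)
    apply (rule holomorphic_on_divide)
    apply (intro holomorphic_intros)
    apply (intro holomorphic_intros)
    apply (erule nz)
    done
qed

lemma phi_deriv0: "cmod \<alpha> < 1 \<Longrightarrow> (phi \<alpha> has_field_derivative 0) (at \<alpha>)"
proof -
  assume a: "cmod \<alpha> < 1"
  have u: "1 - cnj \<alpha> * \<alpha> \<noteq> 0" using denom_nz[OF a, of \<alpha>] a by simp
  have d1: "((\<lambda>z. z - \<alpha>) has_field_derivative 1) (at \<alpha>)"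
    by (auto intro!: derivative_eq_intros)
  have d2: "((\<lambda>z. 1 - cnj \<alpha> * z) has_field_derivative - cnj \<alpha>) (at \<alpha>)"
    by (auto intro!: derivative_eq_intros)
  obtain Q where q: "((\<lambda>z. (z - \<alpha>) / (1 - cnj \<alpha> * z)) has_field_derivative Q) (at \<alpha>)"
    using DERIV_divide[OF d1 d2 u] by blast
  have "((\<lambda>z. (z - \<alpha>) / (1 - cnj \<alpha> * z) * ((z - \<alpha>) / (1 - cnj \<alpha> * z))) has_field_derivative
         (\<alpha> - \<alpha>) / (1 - cnj \<alpha> * \<alpha>) * Q + Q * ((\<alpha> - \<alpha>) / (1 - cnj \<alpha> * \<alpha>))) (at \<alpha>)"
    by (rule DERIV_mult'[OF q q])
  thus ?thesis by (simp add: power2_eq_square)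
qed

lemma phi_mult_deriv:
  assumes a: "cmod \<alpha> < 1" and g: "g holomorphic_on ball 0 1"
  shows "deriv (\<lambda>z. phi \<alpha> z * g z) \<alpha> = 0"
proof -
  have "\<alpha> \<in> ball 0 1" using a by simp
  hence dg: "(g has_field_derivative deriv g \<alpha>) (at \<alpha>)"
    using holomorphic_derivI[OF g] by auto
  have "((\<lambda>z. phi \<alpha> z * g z) has_field_derivative phi \<alpha> \<alpha> * deriv g \<alpha> + 0 * g \<alpha>) (at \<alpha>)"
    by (rule DERIV_mult'[OF phi_deriv0[OF a] dg])
  thus ?thesis by (intro DERIV_imp_deriv) simp
qed

lemma K_sup:
  assumes a: "cmod \<alpha> < 1"
  shows "Ff \<alpha> a b \<in> model_space (phi \<alpha>)"
proof -
  have "h2_inner (Ff \<alpha> a b) (\<lambda>z. phi \<alpha> z * g z) = 0" if g: "g \<in> hardy2" for g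
  proof -
    have gh: "g holomorphic_on ball 0 1" using g by (simp add: hardy2_def)
    have H: "(\<lambda>z. phi \<alpha> z * g z) holomorphic_on ball 0 1"
      by (intro holomorphic_on_mult phi_holo a gh)
    show ?thesis
      using h2_inner_Ff_left[OF a H] phi_mult_deriv[OF a gh] by simp
  qed
  thus ?thesis unfolding model_space_def using Ff_hardy[OF a] by blast
qed



lemma sq_fps: "(1 - fps_const (\<beta>::complex) * fps_X)^2 = 1 - fps_const (2*\<beta>) * fps_X + fps_const (\<beta>^2) * fps_X^2"
proof -
  have "(1 - fps_const \<beta> * fps_X)^2 = 1 - 2 * fps_const \<beta> * fps_X + (fps_const \<beta>)^2 * fps_X^2"
    by (simp add: power2_eq_square algebra_simps)
  thus ?thesis by (simp add: fps_numeral_fps_const)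
qed

lemma A1: "(1 - fps_const (\<beta>::complex) * fps_X)^2 * fps_X^n =
     fps_X^n - fps_const (2 * \<beta>) * fps_X^(Suc n) + fps_const (\<beta>^2) * fps_X^(Suc (Suc n))"
proof -
  have e1: "fps_X^(Suc n) = fps_X * fps_X^n" by simp
  have e2: "fps_X^(Suc (Suc n)) = fps_X * fps_X * fps_X^n" by (simp add: mult.assoc)
  have c1: "fps_const (2*\<beta>) = 2 * fps_const \<beta>" by (simp add: fps_numeral_fps_const)
  have c2: "fps_const (\<beta>^2) = fps_const \<beta> * fps_const \<beta>" by (simp add: power2_eq_square)
  show ?thesis unfolding e1 e2 c1 c2 power2_eq_square by (simp add: algebra_simps)
qed
lemma A2: "(fps_X - fps_const (\<alpha>::complex)) * (fps_X - fps_const \<alpha>) * fps_X^n =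
     fps_X^(Suc (Suc n)) - fps_const (2 * \<alpha>) * fps_X^(Suc n) + fps_const (\<alpha>^2) * fps_X^n"
proof -
  have e1: "fps_X^(Suc n) = fps_X * fps_X^n" by simp
  have e2: "fps_X^(Suc (Suc n)) = fps_X * fps_X * fps_X^n" by (simp add: mult.assoc)
  have c1: "fps_const (2*\<alpha>) = 2 * fps_const \<alpha>" by (simp add: fps_numeral_fps_const)
  have c2: "fps_const (\<alpha>^2) = fps_const \<alpha> * fps_const \<alpha>" by (simp add: power2_eq_square)
  show ?thesis unfolding e1 e2 c1 c2 by (simp add: algebra_simps)
qed

definition gn :: "complex \<Rightarrow> nat \<Rightarrow> complex \<Rightarrow> complex" where
  "gn \<alpha> n = (\<lambda>z. if z \<in> ball 0 1 then (1 - cnj \<alpha> * z)^2 * z^n else 0)"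

lemma fps_cong_ball:
  fixes f g :: "complex \<Rightarrow> complex"
  assumes "f has_fps_expansion F" "\<And>z. z \<in> ball 0 1 \<Longrightarrow> g z = f z"
  shows "g has_fps_expansion F"
proof -
  have ev: "eventually (\<lambda>z. z \<in> ball (0::complex) 1) (nhds 0)"
    by (intro eventually_nhds_in_open) auto
  from assms(1) have r: "fps_conv_radius F > 0" and e: "eventually (\<lambda>z. eval_fps F z = f z) (nhds 0)"
    by (auto simp: has_fps_expansion_def)
  have "eventually (\<lambda>z. eval_fps F z = g z) (nhds 0)"
    by (rule eventually_elim2[OF e ev]) (simp add: assms(2))
  thus ?thesis using r by (simp add: has_fps_expansion_def)
qed

lemma gn_fps: "gn \<alpha> n has_fps_expansion
   (fps_X^n - fps_const (2 * cnj \<alpha>) * fps_X^(Suc n) + fps_const (cnj \<alpha>^2) * fps_X^(Suc (Suc n)))"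
proof -
  have "(\<lambda>z. (1 - cnj \<alpha> * z)^2 * z^n) has_fps_expansion (1 - fps_const (cnj \<alpha>) * fps_X)^2 * fps_X^n"
    unfolding power2_eq_square by (intro fps_expansion_intros)
  moreover have "(1 - fps_const (cnj \<alpha>) * fps_X)^2 * fps_X^n =
     fps_X^n - fps_const (2 * cnj \<alpha>) * fps_X^(Suc n) + fps_const (cnj \<alpha>^2) * fps_X^(Suc (Suc n))"
    by (rule A1)
  ultimately have "(\<lambda>z. (1 - cnj \<alpha> * z)^2 * z^n) has_fps_expansion
     (fps_X^n - fps_const (2 * cnj \<alpha>) * fps_X^(Suc n) + fps_const (cnj \<alpha>^2) * fps_X^(Suc (Suc n)))" by simp
  thus ?thesis by (rule fps_cong_ball) (simp add: gn_def)
qed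

lemma gn_taylor: "taylor_coeff (gn \<alpha> n) m =
   (if m = n then 1 else 0) - 2 * cnj \<alpha> * (if m = Suc n then 1 else 0) + cnj \<alpha>^2 * (if m = Suc (Suc n) then 1 else 0)"
proof -
  have "taylor_coeff (gn \<alpha> n) m = fps_nth (fps_X^n - fps_const (2 * cnj \<alpha>) * fps_X^(Suc n) + fps_const (cnj \<alpha>^2) * fps_X^(Suc (Suc n))) m"
    unfolding taylor_coeff_def by (rule fps_nth_fps_expansion[OF gn_fps, symmetric])
  also have "\<dots> = (if m = n then 1 else 0) - 2 * cnj \<alpha> * (if m = Suc n then 1 else 0) + cnj \<alpha>^2 * (if m = Suc (Suc n) then 1 else 0)"
    by (simp del: power_Suc)
  finally show ?thesis .
qed

lemma gn_hardy: "gn \<alpha> n \<in> hardy2"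
proof -
  have "gn \<alpha> n holomorphic_on ball 0 1 \<longleftrightarrow> (\<lambda>z. (1 - cnj \<alpha> * z)^2 * z^n) holomorphic_on ball 0 1"
    by (rule holomorphic_cong) (simp_all add: gn_def)
  moreover have "(\<lambda>z. (1 - cnj \<alpha> * z)^2 * z^n) holomorphic_on ball 0 1"
    by (intro holomorphic_intros)
  moreover have "\<forall>z. z \<notin> ball 0 1 \<longrightarrow> gn \<alpha> n z = 0" by (simp add: gn_def)
  moreover have "summable (\<lambda>m. (cmod (taylor_coeff (gn \<alpha> n) m))^2)"
    by (rule summable_finite[of "{n, Suc n, Suc (Suc n)}"]) (auto simp: gn_taylor)
  ultimately show ?thesis unfolding hardy2_def by blast
qed

lemma phign_fps:
  assumes a: "cmod \<alpha> < 1"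
  shows "(\<lambda>z. phi \<alpha> z * gn \<alpha> n z) has_fps_expansion
   (fps_X^(Suc (Suc n)) - fps_const (2 * \<alpha>) * fps_X^(Suc n) + fps_const (\<alpha>^2) * fps_X^n)"
proof -
  have h1: "(\<lambda>z. (z - \<alpha>) * (z - \<alpha>) * z^n) has_fps_expansion (fps_X - fps_const \<alpha>) * (fps_X - fps_const \<alpha>) * fps_X^n"
    by (intro fps_expansion_intros)
  have h2: "(fps_X - fps_const \<alpha>) * (fps_X - fps_const \<alpha>) * fps_X^n =
     fps_X^(Suc (Suc n)) - fps_const (2 * \<alpha>) * fps_X^(Suc n) + fps_const (\<alpha>^2) * fps_X^n"
    by (rule A2)
  have h3: "phi \<alpha> z * gn \<alpha> n z = (z - \<alpha>) * (z - \<alpha>) * z^n" if z: "z \<in> ball 0 1" for z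
  proof -
    have u: "1 - cnj \<alpha> * z \<noteq> 0" using denom_nz[OF a z] .
    have "((z - \<alpha>) / (1 - cnj \<alpha> * z))^2 * ((1 - cnj \<alpha> * z)^2 * z^n) = (z - \<alpha>)^2 * z^n"
      using u by (simp add: power_divide)
    thus ?thesis using z by (simp add: gn_def power2_eq_square)
  qed
  show ?thesis by (rule fps_cong_ball[OF h1[unfolded h2] h3])
qed

lemma phign_taylor: assumes a: "cmod \<alpha> < 1" shows "taylor_coeff (\<lambda>z. phi \<alpha> z * gn \<alpha> n z) m =
   (if m = Suc (Suc n) then 1 else 0) - 2 * \<alpha> * (if m = Suc n then 1 else 0) + \<alpha>^2 * (if m = n then 1 else 0)"
proof -
  have "taylor_coeff (\<lambda>z. phi \<alpha> z * gn \<alpha> n z) m = fps_nth (fps_X^(Suc (Suc n)) - fps_const (2 * \<alpha>) * fps_X^(Suc n) + fps_const (\<alpha>^2) * fps_X^n) m"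
    unfolding taylor_coeff_def by (rule fps_nth_fps_expansion[OF phign_fps[OF a], symmetric])
  also have "\<dots> = (if m = Suc (Suc n) then 1 else 0) - 2 * \<alpha> * (if m = Suc n then 1 else 0) + \<alpha>^2 * (if m = n then 1 else 0)"
    by (simp del: power_Suc)
  finally show ?thesis .
qed

lemma K_rec:
  assumes a: "cmod \<alpha> < 1" and f: "f \<in> model_space (phi \<alpha>)"
  shows "taylor_coeff f (Suc (Suc n)) - 2 * cnj \<alpha> * taylor_coeff f (Suc n) + cnj \<alpha>^2 * taylor_coeff f n = 0"
proof -
  define T where "T = taylor_coeff (\<lambda>z. phi \<alpha> z * gn \<alpha> n z)"
  have T: "T m = (if m = Suc (Suc n) then 1 else 0) - 2 * \<alpha> * (if m = Suc n then 1 else 0) + \<alpha>^2 * (if m = n then 1 else 0)" for m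
    unfolding T_def by (rule phign_taylor[OF a])
  have "h2_inner f (\<lambda>z. phi \<alpha> z * gn \<alpha> n z) = 0"
    using f gn_hardy[of \<alpha> n] unfolding model_space_def by blast
  moreover have "h2_inner f (\<lambda>z. phi \<alpha> z * gn \<alpha> n z) =
     (\<Sum>m\<in>{n, Suc n, Suc (Suc n)}. taylor_coeff f m * cnj (T m))"
    unfolding h2_inner_def T_def[symmetric] by (rule suminf_finite) (auto simp: T)
  moreover have "(\<Sum>m\<in>{n, Suc n, Suc (Suc n)}. taylor_coeff f m * cnj (T m)) = taylor_coeff f (Suc (Suc n)) - 2 * cnj \<alpha> * taylor_coeff f (Suc n) + cnj \<alpha>^2 * taylor_coeff f n"
    by (simp add: T algebra_simps)
  ultimately show ?thesis by simp
qed

lemma two_step_induct: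
  assumes "P 0" "P (Suc 0)" "\<And>k. P k \<Longrightarrow> P (Suc k) \<Longrightarrow> P (Suc (Suc k))"
  shows "P n"
proof -
  have "P n \<and> P (Suc n)" by (induction n) (use assms in auto)
  thus ?thesis by simp
qed

lemma K_sub:
  assumes a: "cmod \<alpha> < 1" and f: "f \<in> model_space (phi \<alpha>)"
  shows "f = Ff \<alpha> (taylor_coeff f 0) (taylor_coeff f 1 - cnj \<alpha> * taylor_coeff f 0)"
proof -
  define A where "A = taylor_coeff f 0"
  define B where "B = taylor_coeff f 1 - cnj \<alpha> * taylor_coeff f 0"
  have c: "taylor_coeff f m = cf \<alpha> A B m" for m
  proof (induction m rule: two_step_induct)
    case 1 thus ?case by (simp add: A_def cf_def)
  next
    case 2 thus ?case by (simp add: A_def B_def cf_def)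
  next
    case (3 k)
    have "taylor_coeff f (Suc (Suc k)) = 2 * cnj \<alpha> * taylor_coeff f (Suc k) - cnj \<alpha>^2 * taylor_coeff f k"
      using K_rec[OF a f, of k] by (simp add: algebra_simps)
    also have "\<dots> = 2 * cnj \<alpha> * cf \<alpha> A B (Suc k) - cnj \<alpha>^2 * cf \<alpha> A B k" using 3 by simp
    also have "\<dots> = cf \<alpha> A B (Suc (Suc k))" using cf_rec[of \<alpha> A B k] by (simp add: algebra_simps)
    finally show ?case .
  qed
  have fh: "f \<in> hardy2" using f by (simp add: model_space_def)
  have fhol: "f holomorphic_on ball 0 1" using fh unfolding hardy2_def by blast
  have fz: "\<And>z. z \<notin> ball 0 1 \<Longrightarrow> f z = 0" using fh unfolding hardy2_def by blast
  have "f = Ff \<alpha> A B"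
  proof (rule ext)
    fix z
    show "f z = Ff \<alpha> A B z"
    proof (cases "z \<in> ball 0 1")
      case True
      have "(\<lambda>n. taylor_coeff f n * z ^ n) sums f z"
        by (rule sums_val[OF fhol True])
      moreover have "(\<lambda>n. taylor_coeff (Ff \<alpha> A B) n * z ^ n) sums Ff \<alpha> A B z"
        using True by (intro sums_val Ff_holo a)
      ultimately show ?thesis by (simp add: c taylor_Ff sums_iff)
    next
      case False thus ?thesis using fz[OF False] by (simp add: Ff_def)
    qed
  qed
  thus ?thesis by (simp add: A_def B_def)
qed



definition sS :: "complex \<Rightarrow> real" where "sS \<alpha> = 1 - (cmod \<alpha>)^2"
definition tT :: "complex \<Rightarrow> real" where "tT \<alpha> = sqrt (sS \<alpha>)"
definition Ef :: "complex \<Rightarrow> complex \<Rightarrow> complex \<Rightarrow> complex \<Rightarrow> complex" where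
  "Ef \<alpha> x y = Ff \<alpha> (of_real (tT \<alpha>) * (x - y * \<alpha>)) (of_real (tT \<alpha> * sS \<alpha>) * y)"

lemma sS_pos: "cmod \<alpha> < 1 \<Longrightarrow> sS \<alpha> > 0"
  unfolding sS_def by (simp add: abs_square_less_1)

lemma ba: "cnj \<alpha> * \<alpha> = 1 - of_real (sS \<alpha>)"
  unfolding sS_def using complex_norm_square[of \<alpha>] by (simp add: mult.commute)

lemma TT: "cmod \<alpha> < 1 \<Longrightarrow> of_real (tT \<alpha>) * of_real (tT \<alpha>) = (of_real (sS \<alpha>) :: complex)"
  unfolding tT_def using sS_pos[of \<alpha>] by (simp flip: of_real_mult)

lemma Ff_val: "cmod \<alpha> < 1 \<Longrightarrow> Ff \<alpha> a b \<alpha> = (a * of_real (sS \<alpha>) + b * \<alpha>) / of_real (sS \<alpha>)^2"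
  by (simp add: Ff_def Rf_def ba)

lemma Ff_der: "cmod \<alpha> < 1 \<Longrightarrow> deriv (Ff \<alpha> a b) \<alpha> =
   (a * cnj \<alpha> * of_real (sS \<alpha>) + b * (1 + cnj \<alpha> * \<alpha>)) / of_real (sS \<alpha>)^3"
  using deriv_Ff[of \<alpha> \<alpha> a b] by (simp add: ba)

lemma Ef_val: assumes a: "cmod \<alpha> < 1" shows "Ef \<alpha> x y \<alpha> = of_real (tT \<alpha>) * x / of_real (sS \<alpha>)"
proof -
  define c where "c = (of_real (sS \<alpha>) :: complex)"
  define T where "T = (of_real (tT \<alpha>) :: complex)"
  have c0: "c \<noteq> 0" using sS_pos[OF a] by (simp add: c_def)
  have "Ef \<alpha> x y \<alpha> = (T * (x - y * \<alpha>) * c + T * c * y * \<alpha>) / c^2"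
    unfolding Ef_def Ff_val[OF a] by (simp add: c_def T_def)
  also have "\<dots> = T * x / c" using c0 by (simp add: field_simps power2_eq_square)
  finally show ?thesis by (simp add: c_def T_def)
qed

lemma Ef_der: assumes a: "cmod \<alpha> < 1"
  shows "deriv (Ef \<alpha> x y) \<alpha> = of_real (tT \<alpha>) * (x * cnj \<alpha> + y) / of_real (sS \<alpha>)^2"
proof -
  define c where "c = (of_real (sS \<alpha>) :: complex)"
  define T where "T = (of_real (tT \<alpha>) :: complex)"
  have c0: "c \<noteq> 0" using sS_pos[OF a] by (simp add: c_def)
  have "deriv (Ef \<alpha> x y) \<alpha> = (T * (x - y * \<alpha>) * cnj \<alpha> * c + T * c * y * (1 + cnj \<alpha> * \<alpha>)) / c^3"
    unfolding Ef_def Ff_der[OF a] by (simp add: c_def T_def)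
  also have "\<dots> = T * (x * cnj \<alpha> + y) / c^2" using c0 by (simp add: field_simps power2_eq_square power3_eq_cube)
  finally show ?thesis by (simp add: c_def T_def)
qed

lemma Ef_holo: "cmod \<alpha> < 1 \<Longrightarrow> Ef \<alpha> x y holomorphic_on ball 0 1"
  unfolding Ef_def by (rule Ff_holo)

lemma inner_Ef: assumes a: "cmod \<alpha> < 1"
  shows "h2_inner (Ef \<alpha> x' y') (Ef \<alpha> x y) = cnj x * x' + cnj y * y'"
proof -
  define c where "c = (of_real (sS \<alpha>) :: complex)"
  define T where "T = (of_real (tT \<alpha>) :: complex)"
  have c0: "c \<noteq> 0" using sS_pos[OF a] by (simp add: c_def)
  have TT': "T * T = c" using TT[OF a] by (simp add: c_def T_def)
  have "h2_inner (Ef \<alpha> x' y') (Ff \<alpha> (of_real (tT \<alpha>) * (x - y * \<alpha>)) (of_real (tT \<alpha> * sS \<alpha>) * y))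
      = cnj (of_real (tT \<alpha>) * (x - y * \<alpha>)) * Ef \<alpha> x' y' \<alpha> + cnj (of_real (tT \<alpha> * sS \<alpha>) * y) * deriv (Ef \<alpha> x' y') \<alpha>"
    by (rule h2_inner_Ff_right[OF a Ef_holo[OF a]])
  also have "\<dots> = T * (cnj x - cnj y * cnj \<alpha>) * (T * x' / c) + T * c * cnj y * (T * (x' * cnj \<alpha> + y') / c^2)"
    unfolding Ef_val[OF a] Ef_der[OF a] by (simp add: c_def T_def algebra_simps)
  also have "\<dots> = (T * T / c) * (cnj x * x' + cnj y * y')"
    using c0 by (simp add: field_simps power2_eq_square)
  also have "\<dots> = cnj x * x' + cnj y * y'" using c0 TT' by simp
  finally show ?thesis unfolding Ef_def .
qed

lemma norm_Ef: assumes a: "cmod \<alpha> < 1"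
  shows "h2_norm (Ef \<alpha> x y) = sqrt ((cmod x)^2 + (cmod y)^2)"
proof -
  define C where "C = taylor_coeff (Ef \<alpha> x y)"
  have summ: "summable (\<lambda>n. (cmod (C n))^2)"
    unfolding C_def Ef_def taylor_Ff by (rule cf_summable[OF a])
  have "(\<lambda>n. complex_of_real ((cmod (C n))^2)) sums complex_of_real (\<Sum>n. (cmod (C n))^2)"
    by (rule sums_of_real[OF summable_sums[OF summ]])
  hence "(\<lambda>n. C n * cnj (C n)) sums complex_of_real (\<Sum>n. (cmod (C n))^2)"
    by (simp only: complex_norm_square)
  hence "h2_inner (Ef \<alpha> x y) (Ef \<alpha> x y) = complex_of_real (\<Sum>n. (cmod (C n))^2)"
    unfolding h2_inner_def C_def by (simp add: sums_iff)
  hence "complex_of_real (\<Sum>n. (cmod (C n))^2) = cnj x * x + cnj y * y"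
    using inner_Ef[OF a] by simp
  also have "\<dots> = complex_of_real ((cmod x)^2 + (cmod y)^2)"
    by (simp only: of_real_add complex_norm_square mult.commute)
  finally have "(\<Sum>n. (cmod (C n))^2) = (cmod x)^2 + (cmod y)^2"
    by (simp only: of_real_eq_iff)
  thus ?thesis unfolding h2_norm_def C_def by simp
qed

lemma Ff_as_Ef: assumes a: "cmod \<alpha> < 1"
  shows "Ff \<alpha> a b = Ef \<alpha> (a / of_real (tT \<alpha>) + b / of_real (tT \<alpha> * sS \<alpha>) * \<alpha>) (b / of_real (tT \<alpha> * sS \<alpha>))"
proof -
  have s0: "sS \<alpha> > 0" using sS_pos[OF a] .
  hence t0: "tT \<alpha> > 0" by (simp add: tT_def)
  have "of_real (tT \<alpha>) * (a / of_real (tT \<alpha>) + b / of_real (tT \<alpha> * sS \<alpha>) * \<alpha> - b / of_real (tT \<alpha> * sS \<alpha>) * \<alpha>) = a"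
    using t0 by simp
  moreover have "of_real (tT \<alpha> * sS \<alpha>) * (b / of_real (tT \<alpha> * sS \<alpha>)) = b"
    using t0 s0 by simp
  ultimately show ?thesis unfolding Ef_def by simp
qed



lemma deriv_zf:
  assumes "f holomorphic_on ball 0 1" "g holomorphic_on ball 0 1" "w \<in> ball 0 1"
  shows "deriv (\<lambda>z. z * f z - g z) w = f w + w * deriv f w - deriv g w"
proof -
  have df: "(f has_field_derivative deriv f w) (at w)" using holomorphic_derivI[OF assms(1) _ assms(3)] by auto
  have dg: "(g has_field_derivative deriv g w) (at w)" using holomorphic_derivI[OF assms(2) _ assms(3)] by auto
  have "((\<lambda>z. z * f z - g z) has_field_derivative (w * deriv f w + 1 * f w) - deriv g w) (at w)"
    by (intro DERIV_diff DERIV_mult' DERIV_ident df dg)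
  thus ?thesis by (intro DERIV_imp_deriv) (simp add: algebra_simps)
qed

lemma orth_iff:
  assumes a: "cmod \<alpha> < 1" and E: "E holomorphic_on ball 0 1" and p: "p holomorphic_on ball 0 1"
  shows "(\<forall>k\<in>model_space (phi \<alpha>). h2_inner (\<lambda>z. z * E z - p z) k = 0) \<longleftrightarrow>
         (\<alpha> * E \<alpha> - p \<alpha> = 0 \<and> E \<alpha> + \<alpha> * deriv E \<alpha> - deriv p \<alpha> = 0)"
proof -
  have w: "\<alpha> \<in> ball 0 1" using a by simp
  have H: "(\<lambda>z. z * E z - p z) holomorphic_on ball 0 1" by (intro holomorphic_intros E p)
  have inner: "h2_inner (\<lambda>z. z * E z - p z) (Ff \<alpha> a' b') =
      cnj a' * (\<alpha> * E \<alpha> - p \<alpha>) + cnj b' * (E \<alpha> + \<alpha> * deriv E \<alpha> - deriv p \<alpha>)" for a' b'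
    using h2_inner_Ff_right[OF a H, of a' b'] deriv_zf[OF E p w] by simp
  show ?thesis
  proof
    assume h: "\<forall>k\<in>model_space (phi \<alpha>). h2_inner (\<lambda>z. z * E z - p z) k = 0"
    have "h2_inner (\<lambda>z. z * E z - p z) (Ff \<alpha> 1 0) = 0" using h K_sup[OF a] by blast
    moreover have "h2_inner (\<lambda>z. z * E z - p z) (Ff \<alpha> 0 1) = 0" using h K_sup[OF a] by blast
    ultimately show "\<alpha> * E \<alpha> - p \<alpha> = 0 \<and> E \<alpha> + \<alpha> * deriv E \<alpha> - deriv p \<alpha> = 0"
      using inner[of 1 0] inner[of 0 1] by simp
  next
    assume h: "\<alpha> * E \<alpha> - p \<alpha> = 0 \<and> E \<alpha> + \<alpha> * deriv E \<alpha> - deriv p \<alpha> = 0"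
    show "\<forall>k\<in>model_space (phi \<alpha>). h2_inner (\<lambda>z. z * E z - p z) k = 0"
    proof
      fix k assume k: "k \<in> model_space (phi \<alpha>)"
      have "\<exists>a' b'. k = Ff \<alpha> a' b'" using K_sub[OF a k] by blast
      then obtain a' b' where kk: "k = Ff \<alpha> a' b'" by blast
      show "h2_inner (\<lambda>z. z * E z - p z) k = 0" unfolding kk using inner[of a' b'] h by simp
    qed
  qed
qed

lemma Ff_unique:
  assumes a: "cmod \<alpha> < 1" and v: "Ff \<alpha> a b \<alpha> = Ff \<alpha> a' b' \<alpha>"
    and d: "deriv (Ff \<alpha> a b) \<alpha> = deriv (Ff \<alpha> a' b') \<alpha>"
  shows "a = a' \<and> b = b'"
proof -
  define c where "c = (of_real (sS \<alpha>) :: complex)"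
  have c0: "c \<noteq> 0" using sS_pos[OF a] by (simp add: c_def)
  have e1: "a * c + b * \<alpha> = a' * c + b' * \<alpha>"
    using v c0 unfolding Ff_val[OF a] c_def[symmetric] by (simp add: divide_simps)
  have e2: "a * cnj \<alpha> * c + b * (1 + cnj \<alpha> * \<alpha>) = a' * cnj \<alpha> * c + b' * (1 + cnj \<alpha> * \<alpha>)"
    using d c0 unfolding Ff_der[OF a] c_def[symmetric] by (simp add: divide_simps)
  have "b - b' = (a * cnj \<alpha> * c + b * (1 + cnj \<alpha> * \<alpha>) - (a' * cnj \<alpha> * c + b' * (1 + cnj \<alpha> * \<alpha>)))
                   - cnj \<alpha> * ((a * c + b * \<alpha>) - (a' * c + b' * \<alpha>))"
    by (simp add: algebra_simps)
  hence bb: "b = b'" using e1 e2 by simp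
  hence "(a - a') * c = 0" using e1 by (simp add: algebra_simps)
  hence "a = a'" using c0 by simp
  thus ?thesis using bb by simp
qed

lemma proj_E:
  assumes a: "cmod \<alpha> < 1"
  shows "compressed_shift (phi \<alpha>) (Ef \<alpha> x y) = Ef \<alpha> (\<alpha> * x) (of_real (sS \<alpha>) * x + \<alpha> * y)"
proof -
  define c where "c = (of_real (sS \<alpha>) :: complex)"
  define T where "T = (of_real (tT \<alpha>) :: complex)"
  have c0: "c \<noteq> 0" using sS_pos[OF a] by (simp add: c_def)
  define E where "E = Ef \<alpha> x y"
  define E2 where "E2 = Ef \<alpha> (\<alpha> * x) (c * x + \<alpha> * y)"
  have EH: "E holomorphic_on ball 0 1" unfolding E_def by (rule Ef_holo[OF a])
  have E2H: "E2 holomorphic_on ball 0 1" unfolding E2_def by (rule Ef_holo[OF a])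
  have E2K: "E2 \<in> model_space (phi \<alpha>)" unfolding E2_def Ef_def by (rule K_sup[OF a])
  have c1: "\<alpha> * E \<alpha> - E2 \<alpha> = 0"
    unfolding E_def E2_def Ef_val[OF a] by (simp add: algebra_simps)
  have c2: "E \<alpha> + \<alpha> * deriv E \<alpha> - deriv E2 \<alpha> = 0"
    unfolding E_def E2_def Ef_val[OF a] Ef_der[OF a] c_def[symmetric] T_def[symmetric]
    using c0 by (simp add: field_simps power2_eq_square)
  have PE2: "E2 \<in> model_space (phi \<alpha>) \<and> (\<forall>k\<in>model_space (phi \<alpha>). h2_inner (\<lambda>z. z * E z - E2 z) k = 0)"
    using E2K orth_iff[OF a EH E2H] c1 c2 by simp
  have uniq: "p = E2" if hp: "p \<in> model_space (phi \<alpha>) \<and> (\<forall>k\<in>model_space (phi \<alpha>). h2_inner (\<lambda>z. z * E z - p z) k = 0)" for p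
  proof -
    define a2 where "a2 = taylor_coeff p 0"
    define b2 where "b2 = taylor_coeff p 1 - cnj \<alpha> * taylor_coeff p 0"
    have pF: "p = Ff \<alpha> a2 b2" unfolding a2_def b2_def using K_sub[OF a] hp by blast
    have pH: "p holomorphic_on ball 0 1" unfolding pF by (rule Ff_holo[OF a])
    have "\<alpha> * E \<alpha> - p \<alpha> = 0 \<and> E \<alpha> + \<alpha> * deriv E \<alpha> - deriv p \<alpha> = 0"
      using hp orth_iff[OF a EH pH] by blast
    hence "p \<alpha> = E2 \<alpha>" "deriv p \<alpha> = deriv E2 \<alpha>" using c1 c2 by (simp_all add: algebra_simps)
    hence "a2 = of_real (tT \<alpha>) * (\<alpha> * x - (c * x + \<alpha> * y) * \<alpha>) \<and> b2 = of_real (tT \<alpha> * sS \<alpha>) * (c * x + \<alpha> * y)"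
      unfolding pF E2_def Ef_def by (rule Ff_unique[OF a])
    thus ?thesis unfolding pF E2_def Ef_def by simp
  qed
  have "(THE p. p \<in> model_space (phi \<alpha>) \<and> (\<forall>k\<in>model_space (phi \<alpha>). h2_inner (\<lambda>z. z * E z - p z) k = 0)) = E2"
    by (rule the_equality) (rule PE2, erule uniq)
  thus ?thesis unfolding compressed_shift_def h2_proj_def E_def E2_def c_def by simp
qed



lemma val_E:
  assumes a: "cmod \<alpha> < 1"
  shows "h2_inner (compressed_shift (phi \<alpha>) (Ef \<alpha> x y)) (Ef \<alpha> x y) =
         \<alpha> * complex_of_real ((cmod x)^2 + (cmod y)^2) + of_real (sS \<alpha>) * (x * cnj y)"
proof -
  have "h2_inner (compressed_shift (phi \<alpha>) (Ef \<alpha> x y)) (Ef \<alpha> x y) =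
        cnj x * (\<alpha> * x) + cnj y * (of_real (sS \<alpha>) * x + \<alpha> * y)"
    unfolding proj_E[OF a] inner_Ef[OF a] ..
  also have "\<dots> = \<alpha> * (x * cnj x + y * cnj y) + of_real (sS \<alpha>) * (x * cnj y)"
    by (simp add: algebra_simps)
  also have "x * cnj x + y * cnj y = complex_of_real ((cmod x)^2 + (cmod y)^2)"
    by (simp only: of_real_add complex_norm_square)
  finally show ?thesis .
qed

lemma upper:
  assumes a: "cmod \<alpha> < 1" and f: "f \<in> model_space (phi \<alpha>)" and n: "h2_norm f = 1"
  shows "cmod (h2_inner (compressed_shift (phi \<alpha>) f) f) \<le> cmod \<alpha> + sS \<alpha> / 2"
proof -
  have "\<exists>a' b'. f = Ff \<alpha> a' b'" using K_sub[OF a f] by blast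
  then obtain a' b' where "f = Ff \<alpha> a' b'" by blast
  then obtain x y where fE: "f = Ef \<alpha> x y" using Ff_as_Ef[OF a] by blast
  have "sqrt ((cmod x)^2 + (cmod y)^2) = 1" using n norm_Ef[OF a] fE by simp
  hence xy: "(cmod x)^2 + (cmod y)^2 = 1" by (simp add: real_sqrt_eq_1_iff)
  have s0: "sS \<alpha> > 0" by (rule sS_pos[OF a])
  have "0 \<le> (cmod x - cmod y)^2" by simp
  hence pxy: "cmod x * cmod y \<le> 1/2" using xy by (simp add: power2_diff)
  have "cmod (h2_inner (compressed_shift (phi \<alpha>) f) f) = cmod (\<alpha> + of_real (sS \<alpha>) * (x * cnj y))"
    unfolding fE val_E[OF a] xy by simp
  also have "\<dots> \<le> cmod \<alpha> + cmod (of_real (sS \<alpha>) * (x * cnj y))" by (rule norm_triangle_ineq)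
  also have "cmod (of_real (sS \<alpha>) * (x * cnj y)) = sS \<alpha> * (cmod x * cmod y)"
    using s0 by (simp add: norm_mult)
  also have "\<dots> \<le> sS \<alpha> * (1/2)" using s0 pxy by (intro mult_left_mono) auto
  finally show ?thesis by simp
qed

lemma witness:
  assumes a: "cmod \<alpha> < 1"
  shows "\<exists>f. f \<in> model_space (phi \<alpha>) \<and> h2_norm f = 1 \<and>
             cmod (h2_inner (compressed_shift (phi \<alpha>) f) f) = cmod \<alpha> + sS \<alpha> / 2"
proof -
  define u where "u = (if \<alpha> = 0 then 1 else \<alpha> / of_real (cmod \<alpha>))"
  have u1: "cmod u = 1" by (simp add: u_def norm_divide)
  define q where "q = sqrt (1/2)"
  have q2: "q^2 = 1/2" by (simp add: q_def)
  define x where "x = u * of_real q"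
  define y where "y = (of_real q :: complex)"
  have xy: "(cmod x)^2 + (cmod y)^2 = 1" using u1 q2
    by (simp add: x_def y_def norm_mult power_mult_distrib)
  have fK: "Ef \<alpha> x y \<in> model_space (phi \<alpha>)" unfolding Ef_def by (rule K_sup[OF a])
  have fn: "h2_norm (Ef \<alpha> x y) = 1" by (simp add: norm_Ef[OF a] xy)
  have s0: "sS \<alpha> > 0" by (rule sS_pos[OF a])
  have "x * cnj y = u * of_real (q^2)" by (simp add: x_def y_def power2_eq_square)
  hence xcy: "x * cnj y = u / 2" using q2 by simp
  have "cmod (\<alpha> + of_real (sS \<alpha>) * (u / 2)) = cmod \<alpha> + sS \<alpha> / 2"
  proof (cases "\<alpha> = 0")
    case True thus ?thesis using s0 by (simp add: u_def)
  next
    case False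
    hence r0: "cmod \<alpha> > 0" by simp
    have "\<alpha> + of_real (sS \<alpha>) * (u / 2) = \<alpha> * of_real (1 + sS \<alpha> / (2 * cmod \<alpha>))"
      using False r0 by (simp add: u_def field_simps)
    also have "cmod \<dots> = cmod \<alpha> * (1 + sS \<alpha> / (2 * cmod \<alpha>))"
    proof -
      have "0 < 1 + sS \<alpha> / (2 * cmod \<alpha>)" using s0 r0 by (simp add: add_pos_pos)
      thus ?thesis by (simp only: norm_mult norm_of_real abs_of_pos)
    qed
    also have "\<dots> = cmod \<alpha> + sS \<alpha> / 2" using r0 by (simp add: field_simps)
    finally show ?thesis .
  qed
  hence "cmod (h2_inner (compressed_shift (phi \<alpha>) (Ef \<alpha> x y)) (Ef \<alpha> x y)) = cmod \<alpha> + sS \<alpha> / 2"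
    unfolding val_E[OF a] xy xcy by simp
  thus ?thesis using fK fn by blast
qed

theorem mainTheorem10:
  fixes \<alpha> :: complex
  assumes "cmod \<alpha> < 1"
  shows "numerical_radius (model_space (\<lambda>z. ((z - \<alpha>) / (1 - cnj \<alpha> * z))^2))
            (compressed_shift (\<lambda>z. ((z - \<alpha>) / (1 - cnj \<alpha> * z))^2))
         = (1 + 2 * cmod \<alpha> - (cmod \<alpha>)^2) / 2"
proof -
  have eq: "(1 + 2 * cmod \<alpha> - (cmod \<alpha>)^2) / 2 = cmod \<alpha> + sS \<alpha> / 2"
    by (simp add: sS_def field_simps)
  obtain f where f: "f \<in> model_space (phi \<alpha>)" "h2_norm f = 1"
      "cmod (h2_inner (compressed_shift (phi \<alpha>) f) f) = cmod \<alpha> + sS \<alpha> / 2"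
    using witness[OF assms] by blast
  show ?thesis unfolding numerical_radius_def eq
  proof (rule cSup_eq_maximum)
    show "cmod \<alpha> + sS \<alpha> / 2 \<in> {cmod (h2_inner (compressed_shift (phi \<alpha>) f) f) |f.
            f \<in> model_space (phi \<alpha>) \<and> h2_norm f = 1}"
      using f by (metis (mono_tags, lifting) mem_Collect_eq)
  next
    fix v assume "v \<in> {cmod (h2_inner (compressed_shift (phi \<alpha>) f) f) |f.
            f \<in> model_space (phi \<alpha>) \<and> h2_norm f = 1}"
    then obtain g where "g \<in> model_space (phi \<alpha>)" "h2_norm g = 1"
      "v = cmod (h2_inner (compressed_shift (phi \<alpha>) g) g)" by blast
    thus "v \<le> cmod \<alpha> + sS \<alpha> / 2" using upper[OF assms] by simp
  qed
qed

end
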